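(* Let $\mathcal{E}=\{e_1,\dots,e_n\}$ be an orthonormal basis for $\mathbb{R}^n$ and let $M$ be a $k$-dimensional $\mathcal{E}$-PR subspace. Then for every nonzero $x\in M$, $|\mathrm{supp}(x)|\ge k$.
   Context: For $x=\sum_{i=1}^n\alpha_ie_i$, $\mathrm{supp}(x)=\{i:\alpha_i\neq0\}$ and $|\cdot|$ denotes cardinality. A subspace $M$ is an $\mathcal{E}$-PR subspace if $\{P_Me_i\}_{i=1}^n$ (with $P_M$ the orthogonal projection onto $M$) spans $M$ and whenever $x,y\in M$ satisfy $|\langle x,P_Me_i\rangle|=|\langle y,P_Me_i\rangle|$ for all $i$, then $x=\pm y$. *)

theory Defs
  imports "HOL-Analysis.Analysis"
begin

definition orth_proj :: "('a::real_inner) set \<Rightarrow> 'a \<Rightarrow> 'a" where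
  "orth_proj M x = (THE y. y \<in> M \<and> (\<forall>m\<in>M. (x - y) \<bullet> m = 0))"

definition orthonormal_family :: "('n::finite \<Rightarrow> real ^ 'n) \<Rightarrow> bool" where
  "orthonormal_family e \<longleftrightarrow> (\<forall>i j. e i \<bullet> e j = (if i = j then 1 else 0))"

definition supp :: "('n::finite \<Rightarrow> real ^ 'n) \<Rightarrow> real ^ 'n \<Rightarrow> 'n set" where
  "supp e x = {i. (THE \<alpha>. x = (\<Sum>j\<in>UNIV. \<alpha> j *\<^sub>R e j)) i \<noteq> 0}"

text \<open>E-PR subspace (phase retrievable with respect to the projected frame).\<close>
definition EPR :: "('n::finite \<Rightarrow> real ^ 'n) \<Rightarrow> (real ^ 'n) set \<Rightarrow> bool" where
  "EPR e M \<longleftrightarrow>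
     span (range (\<lambda>i. orth_proj M (e i))) = M \<and>
     (\<forall>x\<in>M. \<forall>y\<in>M. (\<forall>i. \<bar>x \<bullet> orth_proj M (e i)\<bar> = \<bar>y \<bullet> orth_proj M (e i)\<bar>)
        \<longrightarrow> x = y \<or> x = - y)"

end

theory Submission
  imports Defs
begin

lemma proj_prop:
  fixes M :: "(real ^ 'n) set"
  assumes "subspace M"
  shows "orth_proj M v \<in> M \<and> (\<forall>m\<in>M. (v - orth_proj M v) \<bullet> m = 0)"
proof -
  obtain y z where y: "y \<in> span M" and z: "\<And>w. w \<in> span M \<Longrightarrow> orthogonal z w" and vyz: "v = y + z"
    using orthogonal_subspace_decomp_exists[of M v] by metis
  have P: "y \<in> M \<and> (\<forall>m\<in>M. (v - y) \<bullet> m = 0)"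
    using y z vyz assms span_eq_iff orthogonal_def by (metis add_diff_cancel_left' span_superset)
  have U: "y' = y" if "y' \<in> M \<and> (\<forall>m\<in>M. (v - y') \<bullet> m = 0)" for y'
  proof -
    have d: "y - y' \<in> M" using P that assms subspace_diff by blast
    have "(v - y') \<bullet> (y - y') = 0" "(v - y) \<bullet> (y - y') = 0" using P that d by auto
    then have "(y - y') \<bullet> (y - y') = 0" by (simp add: inner_diff_left inner_diff_right)
    then show ?thesis by simp
  qed
  have "orth_proj M v = y" unfolding orth_proj_def using P U by (rule the_equality)
  then show ?thesis using P by simp
qed

lemma proj_inner:
  fixes M :: "(real ^ 'n) set"
  assumes "subspace M" "m \<in> M"
  shows "m \<bullet> orth_proj M v = m \<bullet> v"
proof -
  have "(v - orth_proj M v) \<bullet> m = 0" using proj_prop[OF assms(1)] assms(2) by blast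
  then have "m \<bullet> (v - orth_proj M v) = 0" by (simp add: inner_commute)
  then show ?thesis by (simp add: inner_diff_right)
qed

lemma supp_eq:
  fixes e :: "'n::finite \<Rightarrow> real ^ 'n"
  assumes on: "orthonormal_family e"
  shows "supp e x = {i. x \<bullet> e i \<noteq> 0}"
proof -
  have ee: "e i \<bullet> e j = (if i = j then 1 else 0)" for i j using on unfolding orthonormal_family_def by blast
  have coef: "(\<Sum>j\<in>UNIV. \<alpha> j *\<^sub>R e j) \<bullet> e i = \<alpha> i" for \<alpha> i
    by (simp add: inner_sum_left ee if_distrib cong: if_cong)
  have inj: "inj e" using ee by (metis inj_def zero_neq_one)
  have ind: "independent (range e)"
  proof (rule pairwise_orthogonal_independent)
    show "pairwise orthogonal (range e)" unfolding pairwise_def orthogonal_def using ee by auto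
    show "0 \<notin> range e" using ee by (metis imageE inner_zero_left zero_neq_one)
  qed
  have "card (range e) = dim (UNIV :: (real^'n) set)"
    using inj by (simp add: card_image dim_UNIV)
  then have sp: "UNIV \<subseteq> span (range e)" using card_eq_dim[of "range e" UNIV] ind by simp
  define d where "d = x - (\<Sum>j\<in>UNIV. (x \<bullet> e j) *\<^sub>R e j)"
  have "\<And>y. y \<in> range e \<Longrightarrow> orthogonal d y"
    unfolding d_def orthogonal_def using coef by (auto simp: inner_diff_left)
  then have "orthogonal d d" using sp orthogonal_to_span by blast
  then have "d = 0" by (simp add: orthogonal_def)
  then have ex: "x = (\<Sum>j\<in>UNIV. (x \<bullet> e j) *\<^sub>R e j)" unfolding d_def by simp
  have "(THE \<alpha>. x = (\<Sum>j\<in>UNIV. \<alpha> j *\<^sub>R e j)) = (\<lambda>i. x \<bullet> e i)"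
  proof (rule the_equality)
    show "x = (\<Sum>j\<in>UNIV. (x \<bullet> e j) *\<^sub>R e j)" by (fact ex)
    fix \<alpha> assume "x = (\<Sum>j\<in>UNIV. \<alpha> j *\<^sub>R e j)"
    then show "\<alpha> = (\<lambda>i. x \<bullet> e i)" using coef by auto
  qed
  then show ?thesis unfolding supp_def by simp
qed

theorem proposition4p1:
  fixes e :: "'n::finite \<Rightarrow> real ^ 'n" and M :: "(real ^ 'n) set" and k :: nat
  assumes "orthonormal_family e"
    and "subspace M"
    and "dim M = k"
    and "EPR e M"
  shows "\<forall>x\<in>M. x \<noteq> 0 \<longrightarrow> card (supp e x) \<ge> k"
proof (intro ballI impI, rule ccontr)
  fix x assume xM: "x \<in> M" and x0: "x \<noteq> 0" and lt: "\<not> k \<le> card (supp e x)"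
  define S where "S = {i. x \<bullet> e i \<noteq> 0}"
  have cS: "card S < k" using lt supp_eq[OF assms(1)] S_def by simp
  define T where "T = (\<lambda>i. orth_proj M (e i)) ` S"
  have TM: "T \<subseteq> M" using proj_prop[OF assms(2)] T_def by auto
  have "dim (span T) \<le> card S"
    unfolding T_def dim_span
  proof -
    have "dim ((\<lambda>i. orth_proj M (e i)) ` S) \<le> card ((\<lambda>i. orth_proj M (e i)) ` S)"
      by (rule dim_le_card) (auto intro!: span_base)
    also have "\<dots> \<le> card S" by (rule card_image_le) simp
    finally show "dim ((\<lambda>i. orth_proj M (e i)) ` S) \<le> card S" .
  qed
  have dT: "dim (span T) < dim M" using cS assms(3) \<open>dim (span T) \<le> card S\<close> by simp
  have sub: "span T \<subseteq> span M" using TM span_mono by blast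
  have "span T \<noteq> span M"
  proof
    assume "span T = span M"
    then have "dim (span T) = dim (span M)" by simp
    then show False using dT by (simp only: dim_span)
  qed
  then have ssub: "span T \<subset> span M" using sub by blast
  then obtain y where y0: "y \<noteq> 0" and yM': "y \<in> span M" and yo: "\<And>z. z \<in> span T \<Longrightarrow> orthogonal y z"
    using orthogonal_to_subspace_exists_gen[OF ssub] by blast
  have yM: "y \<in> M" using yM' span_eq_iff[of M] assms(2) by blast
  have yS: "y \<bullet> e i = 0" if "i \<in> S" for i
  proof -
    have "orth_proj M (e i) \<in> span T" unfolding T_def using that by (intro span_base imageI)
    then have "y \<bullet> orth_proj M (e i) = 0" using yo unfolding orthogonal_def by blast
    then show ?thesis using proj_inner[OF assms(2) yM] by simp
  qed
  have pm: "x + y \<in> M" "x - y \<in> M"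
    using subspace_add[OF assms(2) xM yM] subspace_diff[OF assms(2) xM yM] by auto
  have "\<bar>(x + y) \<bullet> orth_proj M (e i)\<bar> = \<bar>(x - y) \<bullet> orth_proj M (e i)\<bar>" for i
  proof -
    have "\<bar>(x + y) \<bullet> e i\<bar> = \<bar>(x - y) \<bullet> e i\<bar>"
    proof (cases "i \<in> S")
      case True then show ?thesis using yS by (simp add: inner_add_left inner_diff_left)
    next
      case False then have "x \<bullet> e i = 0" using S_def by simp
      then show ?thesis by (simp add: inner_add_left inner_diff_left)
    qed
    then show ?thesis using proj_inner[OF assms(2) pm(1)] proj_inner[OF assms(2) pm(2)] by simp
  qed
  then have "x + y = x - y \<or> x + y = - (x - y)" using assms(4) pm unfolding EPR_def by (metis (no_types))
  then show False
  proof
    assume "x + y = x - y" then have "2 *\<^sub>R y = 0" by (simp add: algebra_simps scaleR_2)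
    then show False using y0 by simp
  next
    assume "x + y = - (x - y)" then have "2 *\<^sub>R x = 0" by (simp add: algebra_simps scaleR_2)
    then show False using x0 by simp
  qed
qed

end
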